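(* For all $x,y\in\mathcal A$, the power series $\mathcal S(x,y;\lambda)=\sum_{n\ge0}P_x(W_n=y)\lambda^n$ and $\mathcal R(x,y;\lambda)=\sum_{n\ge0}P_x(\tau_y=n)\lambda^n$ have radii of convergence strictly greater than $1$.
   Context: Fix an integer $N\ge 3$. Let $\mathcal G_N$ be the groupoid with object set $\{1,\dots,N\}$ generated by arrows $A_{i,j}^{(k)}$, $i\neq j\in\{1,\dots,N\}$, $k\in\{-1,1\}$, with source $i$ and target $j$, subject to the relations $A_{i,j}^{(k)}A_{j,\ell}^{(k)}=A_{i,\ell}^{(k)}$ for all $i,j,\ell$, $k$, with the convention $A_{i,i}^{(k)}:=e_i$ (unit at object $i$). Let $\mathcal A$ be its arrow set. Let $\{W_n\}_{n\ge0}$ be the Markov chain on $\mathcal A$ with $P(W_{n+1}=y\mid W_n=x)=p_{i,j}^{(k)}$ if $x^{-1}y=A_{i,j}^{(k)}$ with $i\ne j$ and $0$ otherwise, where $p_{i,j}^{(k)}\in(0,1)$ and $\sum_{j\ne i}\sum_{k=\pm1}p_{i,j}^{(k)}=1$ for each $i$; $P_x$ denotes the law with $W_0=x$. For $y\in\mathcal A$, $\tau_y=\inf\{n\ge0: W_n=y\}$ is the first hitting time of $y$ (possibly $\infty$). (A power series that is identically zero is regarded as having infinite radius of convergence.) *)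

theory Defs
  imports "HOL-Probability.Probability"
begin

text \<open>Concrete model of the groupoid G_N by reduced (normal-form) words.
  G_N is the free product (over the object set) of two copies (labels k = 1, k = -1)
  of the pair groupoid on {1..N}.  An arrow is represented as (s, ws) where s is its source
  and ws = [(k_1,i_1),...,(k_m,i_m)] is the reduced word
  A_{s,i_1}^{(k_1)} A_{i_1,i_2}^{(k_2)} ... A_{i_{m-1},i_m}^{(k_m)}
  with consecutive objects distinct and consecutive labels distinct (alternating).\<close>

type_synonym arrow = "nat \<times> (int \<times> nat) list"

definition src :: "arrow \<Rightarrow> nat" where
  "src x = fst x"

definition tgt :: "arrow \<Rightarrow> nat" where
  "tgt x = (if snd x = [] then fst x else snd (last (snd x)))"

definition arrows :: "nat \<Rightarrow> arrow set" where
  "arrows N = {(s, ws). s \<in> {1..N}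
      \<and> (\<forall>(k, j) \<in> set ws. j \<in> {1..N} \<and> k \<in> {-1, 1})
      \<and> (\<forall>m < length ws. snd (ws ! m) \<noteq> (if m = 0 then s else snd (ws ! (m - 1))))
      \<and> (\<forall>m. Suc m < length ws \<longrightarrow> fst (ws ! m) \<noteq> fst (ws ! Suc m))}"

definition unit_arr :: "nat \<Rightarrow> arrow" where
  "unit_arr i = (i, [])"

definition gen :: "nat \<Rightarrow> nat \<Rightarrow> int \<Rightarrow> arrow" where
  "gen i j k = (if i = j then (i, []) else (i, [(k, j)]))"

text \<open>Right multiplication of a reduced word by one letter (k,j), using the relation
  A_{i,j}^{(k)} A_{j,l}^{(k)} = A_{i,l}^{(k)} (with A_{i,i}^{(k)} = e_i) to reduce.\<close>
definition push :: "arrow \<Rightarrow> int \<times> nat \<Rightarrow> arrow" where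
  "push x l = (let (s, ws) = x; (k, j) = l in
     if ws \<noteq> [] \<and> fst (last ws) = k then
       (if tgt (s, butlast ws) = j then (s, butlast ws) else (s, butlast ws @ [(k, j)]))
     else (s, ws @ [(k, j)]))"

text \<open>Groupoid composition x y (x first, then y; defined when tgt x = src y).\<close>
definition mult :: "arrow \<Rightarrow> arrow \<Rightarrow> arrow" where
  "mult x y = foldl push x (snd y)"

text \<open>One-step transition law: from x, move to x A_{tgt x, j}^{(k)} with probability
  p (tgt x) j k, i.e. P(W_{n+1} = y | W_n = x) = p_{i,j}^{(k)} iff x^{-1} y = A_{i,j}^{(k)}.\<close>
definition trans_prob :: "nat \<Rightarrow> (nat \<Rightarrow> nat \<Rightarrow> int \<Rightarrow> real) \<Rightarrow> arrow \<Rightarrow> arrow \<Rightarrow> real" where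
  "trans_prob N p x y =
     (\<Sum>j\<in>{1..N} - {tgt x}. \<Sum>k\<in>{-1, 1::int}.
        p (tgt x) j k * (if y = mult x (gen (tgt x) j k) then 1 else 0))"

definition kernel :: "nat \<Rightarrow> (nat \<Rightarrow> nat \<Rightarrow> int \<Rightarrow> real) \<Rightarrow> arrow \<Rightarrow> arrow pmf" where
  "kernel N p x = embed_pmf (trans_prob N p x)"

fun path_pmf :: "nat \<Rightarrow> (nat \<Rightarrow> nat \<Rightarrow> int \<Rightarrow> real) \<Rightarrow> arrow \<Rightarrow> nat \<Rightarrow> arrow list pmf" where
  "path_pmf N p x 0 = return_pmf [x]"
| "path_pmf N p x (Suc n) =
     bind_pmf (path_pmf N p x n) (\<lambda>w. map_pmf (\<lambda>z. w @ [z]) (kernel N p (last w)))"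

definition prob_at :: "nat \<Rightarrow> (nat \<Rightarrow> nat \<Rightarrow> int \<Rightarrow> real) \<Rightarrow> arrow \<Rightarrow> arrow \<Rightarrow> nat \<Rightarrow> real" where
  "prob_at N p x y n = measure_pmf.prob (path_pmf N p x n) {w. w ! n = y}"

definition prob_hit :: "nat \<Rightarrow> (nat \<Rightarrow> nat \<Rightarrow> int \<Rightarrow> real) \<Rightarrow> arrow \<Rightarrow> arrow \<Rightarrow> nat \<Rightarrow> real" where
  "prob_hit N p x y n =
     measure_pmf.prob (path_pmf N p x n) {w. w ! n = y \<and> (\<forall>m < n. w ! m \<noteq> y)}"

end

theory Submission
  imports Defs
begin

lemma tgt_simps[simp]: "tgt (s, []) = s" "tgt (s, ws @ [l]) = snd l"
  by (auto simp: tgt_def)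

lemma arrows_nil[simp]: "(s, []) \<in> arrows N \<longleftrightarrow> s \<in> {1..N}"
  by (auto simp: arrows_def)

lemma arrows_snoc:
  "(s, ws @ [(k,j)]) \<in> arrows N \<longleftrightarrow> (s, ws) \<in> arrows N \<and> j \<in> {1..N} \<and> k \<in> {-1,1}
     \<and> j \<noteq> tgt (s, ws) \<and> (ws \<noteq> [] \<longrightarrow> fst (last ws) \<noteq> k)"
proof -
  have A: "(\<forall>m < length (ws @ [(k,j)]). snd ((ws @ [(k,j)]) ! m) \<noteq> (if m = 0 then s else snd ((ws @ [(k,j)]) ! (m - 1))))
     \<longleftrightarrow> (\<forall>m < length ws. snd (ws ! m) \<noteq> (if m = 0 then s else snd (ws ! (m - 1)))) \<and> j \<noteq> tgt (s, ws)"
  proof -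
    have "(\<forall>m < length (ws @ [(k,j)]). P m) \<longleftrightarrow> (\<forall>m < length ws. P m) \<and> P (length ws)" for P
      by (auto simp: less_Suc_eq)
    moreover have "snd ((ws @ [(k,j)]) ! length ws) \<noteq> (if length ws = 0 then s else snd ((ws @ [(k,j)]) ! (length ws - 1)))
        \<longleftrightarrow> j \<noteq> tgt (s, ws)"
      by (cases ws rule: rev_cases) (auto simp: tgt_def nth_append)
    moreover have "m < length ws \<Longrightarrow> snd ((ws @ [(k,j)]) ! m) \<noteq> (if m = 0 then s else snd ((ws @ [(k,j)]) ! (m - 1)))
        \<longleftrightarrow> snd (ws ! m) \<noteq> (if m = 0 then s else snd (ws ! (m - 1)))" for m
      by (auto simp: nth_append)
    ultimately show ?thesis by (simp only:) (auto simp: nth_append)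
  qed
  have B: "(\<forall>m. Suc m < length (ws @ [(k,j)]) \<longrightarrow> fst ((ws @ [(k,j)]) ! m) \<noteq> fst ((ws @ [(k,j)]) ! Suc m))
     \<longleftrightarrow> (\<forall>m. Suc m < length ws \<longrightarrow> fst (ws ! m) \<noteq> fst (ws ! Suc m)) \<and> (ws \<noteq> [] \<longrightarrow> fst (last ws) \<noteq> k)"
  proof -
    have "(\<forall>m. Suc m < length (ws @ [(k,j)]) \<longrightarrow> P m) \<longleftrightarrow> (\<forall>m. Suc m < length ws \<longrightarrow> P m) \<and> (ws \<noteq> [] \<longrightarrow> P (length ws - 1))" for P
      by (cases ws rule: rev_cases) (auto simp: less_Suc_eq)
    moreover have "ws \<noteq> [] \<Longrightarrow> fst ((ws @ [(k,j)]) ! (length ws - 1)) \<noteq> fst ((ws @ [(k,j)]) ! Suc (length ws - 1))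
        \<longleftrightarrow> fst (last ws) \<noteq> k"
      by (cases ws rule: rev_cases) (auto simp: nth_append)
    moreover have "Suc m < length ws \<Longrightarrow> fst ((ws @ [(k,j)]) ! m) \<noteq> fst ((ws @ [(k,j)]) ! Suc m)
        \<longleftrightarrow> fst (ws ! m) \<noteq> fst (ws ! Suc m)" for m
      by (auto simp: nth_append)
    ultimately show ?thesis by (simp only:) (auto simp: nth_append)
  qed
  show ?thesis unfolding arrows_def using A B by auto
qed

lemma push_eq: "push (s, ws) (k, j) = (if ws \<noteq> [] \<and> fst (last ws) = k then
       (if tgt (s, butlast ws) = j then (s, butlast ws) else (s, butlast ws @ [(k, j)]))
     else (s, ws @ [(k, j)]))"
  by (simp add: push_def)

lemma push_snoc: "push (s, bw @ [(k0,t0)]) (k, j) = (if k0 = k then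
       (if tgt (s, bw) = j then (s, bw) else (s, bw @ [(k, j)]))
     else (s, bw @ [(k0,t0), (k, j)]))"
  by (simp add: push_def)

lemma push_nil: "push (s, []) (k, j) = (s, [(k, j)])"
  by (simp add: push_def)

lemma fst_push[simp]: "fst (push x l) = fst x"
  by (cases x; cases l) (auto simp: push_def)

lemma tgt_push: "tgt (push x (k,j)) = j"
  by (cases x) (auto simp: push_def tgt_def)

lemma len_push: "length (snd (push x l)) \<le> Suc (length (snd x))"
  by (cases x; cases l) (auto simp: push_def)

lemma arrows_cases:
  assumes "(s, ws) \<in> arrows N"
  obtains "ws = []" "s \<in> {1..N}"
  | bw k0 t0 where "ws = bw @ [(k0,t0)]" "(s, bw) \<in> arrows N" "t0 \<in> {1..N}" "k0 \<in> {-1,1}"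
     "t0 \<noteq> tgt (s, bw)" "bw \<noteq> [] \<Longrightarrow> fst (last bw) \<noteq> k0"
proof (cases ws rule: rev_cases)
  case Nil then show ?thesis using assms that by auto
next
  case (snoc bw l)
  then show ?thesis using assms that(2)[of bw "fst l" "snd l"] by (cases l) (auto simp: arrows_snoc)
qed

lemma arrows_src: "x \<in> arrows N \<Longrightarrow> fst x \<in> {1..N}"
  by (auto simp: arrows_def)

lemma arrows_tgt: "x \<in> arrows N \<Longrightarrow> tgt x \<in> {1..N}"
proof -
  assume a: "x \<in> arrows N"
  obtain s ws where x: "x = (s, ws)" by (cases x)
  show ?thesis using a unfolding x by (cases rule: arrows_cases) auto
qed

lemma push_arrows:
  assumes x: "x \<in> arrows N" and j: "j \<in> {1..N}" "j \<noteq> tgt x" and k: "k \<in> {-1,1}"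
  shows "push x (k,j) \<in> arrows N"
proof -
  obtain s ws where xe: "x = (s, ws)" by (cases x)
  from x[unfolded xe] show ?thesis
  proof (cases rule: arrows_cases)
    case 1 then show ?thesis using j k by (simp add: xe push_nil arrows_snoc[of s "[]", simplified])
  next
    case (2 bw k0 t0)
    show ?thesis
    proof (cases "k0 = k")
      case True
      then show ?thesis using 2 j k by (auto simp: xe push_snoc arrows_snoc)
    next
      case False
      have xa: "(s, bw @ [(k0,t0)]) \<in> arrows N" using x xe 2 by simp
      have "(s, (bw @ [(k0,t0)]) @ [(k,j)]) \<in> arrows N"
        apply (subst arrows_snoc) using xa j k False xe 2 by auto
      then show ?thesis using False 2 xe by (simp add: push_snoc)
    qed
  qed
qed

lemma push_inv:
  assumes x: "x \<in> arrows N" and j: "j \<noteq> tgt x"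
  shows "push (push x (k,j)) (k, tgt x) = x"
proof -
  obtain s ws where xe: "x = (s, ws)" by (cases x)
  from x[unfolded xe] show ?thesis
  proof (cases rule: arrows_cases)
    case 1 then show ?thesis using j by (simp add: xe push_nil push_snoc[of s "[]", simplified])
  next
    case (2 bw k0 t0)
    show ?thesis
    proof (cases "k0 = k")
      case True
      show ?thesis
      proof (cases "tgt (s, bw) = j")
        case True2: True
        have "push (s, bw) (k, t0) = (s, bw @ [(k, t0)])"
        proof (cases bw rule: rev_cases)
          case Nil then show ?thesis by (simp add: push_nil)
        next
          case (snoc cw l)
          then show ?thesis using 2 True by (cases l) (auto simp: push_snoc)
        qed
        then show ?thesis using 2 True True2 by (simp add: xe push_snoc)
      next
        case False
        then show ?thesis using 2 True by (simp add: xe push_snoc)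
      qed
    next
      case False
      have e1: "push x (k,j) = (s, (bw @ [(k0,t0)]) @ [(k,j)])" using False 2 xe by (simp add: push_snoc)
      have e2: "push (s, (bw @ [(k0,t0)]) @ [(k,j)]) (k,t0) = (s, bw @ [(k0,t0)])"
        by (subst push_snoc) simp
      show ?thesis using e1 e2 2 xe by simp
    qed
  qed
qed

definition lab :: "arrow \<Rightarrow> int" where
  "lab x = (if snd x = [] then 1 else - fst (last (snd x)))"

definition ext :: "arrow \<Rightarrow> nat \<Rightarrow> arrow" where
  "ext x j = (fst x, snd x @ [(lab x, j)])"

definition j1 :: "nat \<Rightarrow> nat" where "j1 t = (if t = 1 then 2 else 1)"
definition j2 :: "nat \<Rightarrow> nat" where "j2 t = (if t = 3 then 2 else 3)"

lemma j12: "N \<ge> 3 \<Longrightarrow> t \<in> {1..N} \<Longrightarrow> j1 t \<in> {1..N} \<and> j2 t \<in> {1..N} \<and> j1 t \<noteq> t \<and> j2 t \<noteq> t \<and> j1 t \<noteq> j2 t"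
  by (auto simp: j1_def j2_def)

lemma lab_in: "x \<in> arrows N \<Longrightarrow> lab x \<in> {-1,1}"
proof -
  assume x: "x \<in> arrows N"
  obtain s ws where xe: "x = (s, ws)" by (cases x)
  from x[unfolded xe] show ?thesis by (cases rule: arrows_cases) (auto simp: lab_def xe)
qed

lemma lab_ne: "x \<in> arrows N \<Longrightarrow> snd x \<noteq> [] \<Longrightarrow> fst (last (snd x)) \<noteq> lab x"
proof -
  assume x: "x \<in> arrows N" and ne: "snd x \<noteq> []"
  obtain s ws where xe: "x = (s, ws)" by (cases x)
  from x[unfolded xe] show ?thesis using ne by (cases rule: arrows_cases) (auto simp: lab_def xe)
qed

lemma tgt_ext[simp]: "tgt (ext x j) = j"
  by (cases x) (simp add: ext_def)

lemma len_ext[simp]: "length (snd (ext x j)) = Suc (length (snd x))"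
  by (simp add: ext_def)

lemma ext_arrows: "x \<in> arrows N \<Longrightarrow> j \<in> {1..N} \<Longrightarrow> j \<noteq> tgt x \<Longrightarrow> ext x j \<in> arrows N"
  using lab_in[of x N] lab_ne[of x N]
  by (cases x) (auto simp: ext_def arrows_snoc)

lemma push_lab: "x \<in> arrows N \<Longrightarrow> push x (lab x, j) = ext x j"
  using lab_ne[of x N]
  by (cases x) (auto simp: ext_def push_eq)

lemma push_ext: "j' \<noteq> tgt x \<Longrightarrow> push (ext x j) (lab x, j') = ext x j'"
  by (cases x) (simp add: ext_def push_snoc)

lemma ext_inj: "ext x j = ext x' j' \<Longrightarrow> x = x' \<and> j = j'"
  by (cases x; cases x') (auto simp: ext_def)

lemma ext_ne: "ext x j \<noteq> x"
  using len_ext[of x j] by (metis n_not_Suc_n)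

definition Ub :: "nat \<Rightarrow> nat \<Rightarrow> arrow set" where
  "Ub N M = {w \<in> arrows N. length (snd w) \<le> M}"

lemma finite_Ub: "finite (Ub N M)"
proof -
  have "Ub N M \<subseteq> {1..N} \<times> {ws. set ws \<subseteq> {-1,1} \<times> {1..N} \<and> length ws \<le> M}"
    by (auto simp: Ub_def arrows_def)
  moreover have "finite ({1..N} \<times> {ws. set ws \<subseteq> ({-1,1::int} \<times> {1..N}) \<and> length ws \<le> M})"
    by (intro finite_cartesian_product finite_lists_length_le) auto
  ultimately show ?thesis by (rule finite_subset)
qed

lemma lagrange:
  fixes w h :: "'a \<Rightarrow> real" assumes A: "finite A"
  shows "(\<Sum>z\<in>A. w z) * (\<Sum>z\<in>A. w z * h z^2) - (\<Sum>z\<in>A. w z * h z)^2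
       = (1/2) * (\<Sum>z\<in>A. \<Sum>z'\<in>A. w z * w z' * (h z - h z')^2)"
proof -
  have "(\<Sum>z\<in>A. \<Sum>z'\<in>A. w z * w z' * (h z - h z')^2)
      = (\<Sum>z\<in>A. \<Sum>z'\<in>A. (w z * h z^2) * w z' - (2 * (w z * h z)) * (w z' * h z') + w z * (w z' * h z'^2))"
    by (intro sum.cong refl) (simp add: power2_eq_square algebra_simps)
  also have "\<dots> = (\<Sum>z\<in>A. \<Sum>z'\<in>A. (w z * h z^2) * w z') - (\<Sum>z\<in>A. \<Sum>z'\<in>A. (2 * (w z * h z)) * (w z' * h z'))
        + (\<Sum>z\<in>A. \<Sum>z'\<in>A. w z * (w z' * h z'^2))"
    by (simp add: sum.distrib sum_subtractf)
  also have "\<dots> = (\<Sum>z\<in>A. w z * h z^2) * (\<Sum>z\<in>A. w z) - (\<Sum>z\<in>A. 2 * (w z * h z)) * (\<Sum>z\<in>A. w z * h z)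
        + (\<Sum>z\<in>A. w z) * (\<Sum>z\<in>A. w z * h z^2)"
    by (simp only: sum_product)
  also have "\<dots> = 2 * ((\<Sum>z\<in>A. w z) * (\<Sum>z\<in>A. w z * h z^2) - (\<Sum>z\<in>A. w z * h z)^2)"
  proof -
    have "(\<Sum>z\<in>A. 2 * (w z * h z)) = 2 * (\<Sum>z\<in>A. w z * h z)" by (simp add: sum_distrib_left)
    then show ?thesis by (simp add: power2_eq_square algebra_simps)
  qed
  finally show ?thesis by simp
qed

lemma lagrange_ge:
  fixes w h :: "'a \<Rightarrow> real" assumes A: "finite A" and w: "\<And>z. z \<in> A \<Longrightarrow> 0 \<le> w z"
    and z: "z1 \<in> A" "z2 \<in> A" "z1 \<noteq> z2"
  shows "w z1 * w z2 * (h z1 - h z2)^2 \<le> (\<Sum>z\<in>A. w z) * (\<Sum>z\<in>A. w z * h z^2) - (\<Sum>z\<in>A. w z * h z)^2"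
proof -
  define F where "F = (\<lambda>(z, z'). w z * w z' * (h z - h z')^2)"
  have Fnn: "x \<in> A \<times> A \<Longrightarrow> 0 \<le> F x" for x using w unfolding F_def by auto
  have "2 * (w z1 * w z2 * (h z1 - h z2)^2) = (\<Sum>x\<in>{(z1,z2),(z2,z1)}. F x)"
    using z by (simp add: F_def power2_commute)
  also have "\<dots> \<le> (\<Sum>x\<in>A \<times> A. F x)"
    using z Fnn A by (intro sum_mono2) auto
  also have "\<dots> = (\<Sum>z\<in>A. \<Sum>z'\<in>A. w z * w z' * (h z - h z')^2)"
    unfolding F_def by (simp add: sum.cartesian_product)
  finally show ?thesis unfolding lagrange[OF A] by simp
qed

lemma lagrange_nn:
  fixes w h :: "'a \<Rightarrow> real" assumes A: "finite A" and w: "\<And>z. z \<in> A \<Longrightarrow> 0 \<le> w z"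
  shows "0 \<le> (\<Sum>z\<in>A. w z) * (\<Sum>z\<in>A. w z * h z^2) - (\<Sum>z\<in>A. w z * h z)^2"
  unfolding lagrange[OF A] using w by (auto intro!: sum_nonneg mult_nonneg_nonneg)


locale gw =
  fixes N :: nat and p :: "nat \<Rightarrow> nat \<Rightarrow> int \<Rightarrow> real"
  assumes N3: "N \<ge> 3"
    and ppos: "\<And>i j k. i \<in> {1..N} \<Longrightarrow> j \<in> {1..N} \<Longrightarrow> i \<noteq> j \<Longrightarrow> k \<in> {-1, 1}
           \<Longrightarrow> 0 < p i j k \<and> p i j k < 1"
    and psum: "\<And>i. i \<in> {1..N} \<Longrightarrow> (\<Sum>j\<in>{1..N} - {i}. \<Sum>k\<in>{-1, 1::int}. p i j k) = 1"
begin

abbreviation "T \<equiv> trans_prob N p"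

lemma T_def': "T z y = (\<Sum>j\<in>{1..N} - {tgt z}. \<Sum>k\<in>{-1, 1::int}.
        p (tgt z) j k * (if y = push z (k,j) then 1 else 0))"
  unfolding trans_prob_def mult_def gen_def by (intro sum.cong refl) auto

lemma T_nonneg: "z \<in> arrows N \<Longrightarrow> 0 \<le> T z y"
  unfolding T_def' using arrows_tgt[of z N] ppos
  by (intro sum_nonneg) (auto intro!: mult_nonneg_nonneg less_imp_le)

lemma T_nz: assumes "T z y \<noteq> 0"
  shows "\<exists>j k. j \<in> {1..N} - {tgt z} \<and> k \<in> {-1,1} \<and> y = push z (k,j)"
proof (rule ccontr)
  assume "\<not> ?thesis"
  then have "T z y = 0" unfolding T_def' by (intro sum.neutral) auto
  then show False using assms by simp
qed

lemma T_succ: assumes z: "z \<in> arrows N" and "T z y \<noteq> 0"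
  shows "y \<in> arrows N \<and> length (snd y) \<le> Suc (length (snd z))"
  using T_nz[OF assms(2)] push_arrows[OF z] len_push by blast

definition ch :: "arrow \<Rightarrow> arrow set" where
  "ch z = (\<lambda>(j,k). push z (k,j)) ` (({1..N} - {tgt z}) \<times> {-1,1})"

lemma finite_ch: "finite (ch z)" by (simp add: ch_def)

lemma ch_mem: "j \<in> {1..N} - {tgt z} \<Longrightarrow> k \<in> {-1,1} \<Longrightarrow> push z (k,j) \<in> ch z"
  unfolding ch_def by (rule image_eqI[where x = "(j,k)"]) auto

lemma T_sum1: assumes z: "z \<in> arrows N" and A: "finite A" "ch z \<subseteq> A"
  shows "(\<Sum>y\<in>A. T z y) = 1"
proof -
  have "(\<Sum>y\<in>A. T z y) = (\<Sum>j\<in>{1..N} - {tgt z}. \<Sum>k\<in>{-1, 1::int}.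
          (\<Sum>y\<in>A. p (tgt z) j k * (if y = push z (k,j) then 1 else 0)))"
    unfolding T_def'
    by (subst sum.swap, rule sum.cong, simp, subst sum.swap) auto
  also have "\<dots> = (\<Sum>j\<in>{1..N} - {tgt z}. \<Sum>k\<in>{-1, 1::int}. p (tgt z) j k)"
  proof (intro sum.cong refl)
    fix j k assume "j \<in> {1..N} - {tgt z}" "k \<in> {-1, 1::int}"
    then have "push z (k,j) \<in> A" using A ch_mem by blast
    then show "(\<Sum>y\<in>A. p (tgt z) j k * (if y = push z (k,j) then 1 else 0)) = p (tgt z) j k"
      using A(1) by (simp add: sum_distrib_left[symmetric] sum.delta')
  qed
  also have "\<dots> = 1" using psum arrows_tgt[OF z] by simp
  finally show ?thesis .
qed

lemma ch_sub: "z \<in> arrows N \<Longrightarrow> ch z \<subseteq> Ub N (Suc (length (snd z)))"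
  unfolding ch_def Ub_def using len_push[of z] by (auto intro!: push_arrows)

lemma T_lower: assumes "j \<in> {1..N}" "j \<noteq> tgt z" "k \<in> {-1,1}" "tgt z \<in> {1..N}"
  shows "p (tgt z) j k \<le> T z (push z (k,j))"
proof -
  define f where "f = (\<lambda>j' k'. p (tgt z) j' k' * (if push z (k,j) = push z (k',j') then 1 else (0::real)))"
  have nn: "j' \<in> {1..N} - {tgt z} \<Longrightarrow> k' \<in> {-1,1} \<Longrightarrow> 0 \<le> f j' k'" for j' k'
    using assms ppos unfolding f_def by (auto intro!: mult_nonneg_nonneg less_imp_le)
  have "p (tgt z) j k = f j k" by (simp add: f_def)
  also have "\<dots> \<le> (\<Sum>k'\<in>{-1,1::int}. f j k')"
    using assms nn by (intro member_le_sum) auto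
  also have "\<dots> \<le> (\<Sum>j'\<in>{1..N} - {tgt z}. \<Sum>k'\<in>{-1,1::int}. f j' k')"
    using assms nn by (intro member_le_sum[where f = "\<lambda>j'. \<Sum>k'\<in>{-1,1::int}. f j' k'"] sum_nonneg) auto
  also have "\<dots> = T z (push z (k,j))" unfolding T_def' f_def by simp
  finally show ?thesis .
qed

lemma pred_bound:
  assumes Z: "finite Z" "Z \<subseteq> arrows N" and a: "\<And>t. t \<in> {1..N} \<Longrightarrow> 0 \<le> a t"
    and y: "tgt y \<in> {1..N}"
  shows "(\<Sum>z\<in>Z. a (tgt z) * T z y) \<le> (\<Sum>t\<in>{1..N} - {tgt y}. a t * (\<Sum>k\<in>{-1,1::int}. p t (tgt y) k))"
proof -
  define j where "j = tgt y"
  define G where "G = (\<lambda>z t k. a t * p t j k * (if z = push y (k,t) then 1 else (0::real)))"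
  have Gnn: "t \<in> {1..N} - {j} \<Longrightarrow> k \<in> {-1,1} \<Longrightarrow> 0 \<le> G z t k" for z t k
  proof -
    assume t: "t \<in> {1..N} - {j}" and k: "k \<in> {-1,1}"
    have "0 \<le> a t * p t j k" using a[of t] ppos[of t j k] t k y unfolding j_def
      by (auto intro!: mult_nonneg_nonneg less_imp_le)
    then show ?thesis unfolding G_def by auto
  qed
  have pw: "a (tgt z) * T z y \<le> (\<Sum>t\<in>{1..N} - {j}. \<Sum>k\<in>{-1,1::int}. G z t k)" if z: "z \<in> arrows N" for z
  proof -
    have tz: "tgt z \<in> {1..N}" using arrows_tgt[OF z] .
    show ?thesis
    proof (cases "j \<in> {1..N} - {tgt z}")
      case False
      have "T z y = 0" unfolding T_def'
      proof (rule sum.neutral, rule ballI)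
        fix j' assume j': "j' \<in> {1..N} - {tgt z}"
        then have "j' \<noteq> j" using False by auto
        then show "(\<Sum>k\<in>{-1, 1::int}. p (tgt z) j' k * (if y = push z (k,j') then 1 else 0)) = 0"
          unfolding j_def by (intro sum.neutral) (auto simp: tgt_push)
      qed
      moreover have "0 \<le> (\<Sum>t\<in>{1..N} - {j}. \<Sum>k\<in>{-1,1::int}. G z t k)"
        using Gnn by (intro sum_nonneg) auto
      ultimately show ?thesis by simp
    next
      case True
      have "T z y = (\<Sum>j'\<in>{1..N} - {tgt z}. if j' = j then
           (\<Sum>k\<in>{-1, 1::int}. p (tgt z) j k * (if y = push z (k,j) then 1 else 0)) else 0)"
        unfolding T_def'
      proof (intro sum.cong refl)
        fix j' assume j': "j' \<in> {1..N} - {tgt z}"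
        show "(\<Sum>k\<in>{-1, 1::int}. p (tgt z) j' k * (if y = push z (k,j') then 1 else 0)) = (if j' = j then
           (\<Sum>k\<in>{-1, 1::int}. p (tgt z) j k * (if y = push z (k,j) then 1 else 0)) else 0)"
          unfolding j_def by (cases "j' = tgt y") (auto intro!: sum.neutral simp: tgt_push)
      qed
      also have "\<dots> = (\<Sum>k\<in>{-1, 1::int}. p (tgt z) j k * (if y = push z (k,j) then 1 else 0))"
        using True by (simp add: sum.delta)
      finally have Te: "T z y = \<dots>" .
      have "a (tgt z) * T z y = (\<Sum>k\<in>{-1, 1::int}. a (tgt z) * p (tgt z) j k * (if y = push z (k,j) then 1 else 0))"
        unfolding Te by (simp add: sum_distrib_left mult.assoc algebra_simps)
      also have "\<dots> \<le> (\<Sum>k\<in>{-1,1::int}. G z (tgt z) k)"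
      proof (intro sum_mono)
        fix k :: int assume k: "k \<in> {-1,1}"
        have "y = push z (k,j) \<Longrightarrow> z = push y (k, tgt z)"
          using push_inv[OF z, of j k] True by auto
        then show "a (tgt z) * p (tgt z) j k * (if y = push z (k,j) then 1 else 0) \<le> G z (tgt z) k"
          unfolding G_def using Gnn[of "tgt z" k z] True k tz unfolding G_def by auto
      qed
      also have "\<dots> \<le> (\<Sum>t\<in>{1..N} - {j}. \<Sum>k\<in>{-1,1::int}. G z t k)"
        using True tz Gnn by (intro member_le_sum[where f = "\<lambda>t. \<Sum>k\<in>{-1,1::int}. G z t k"] sum_nonneg) auto
      finally show ?thesis .
    qed
  qed
  have "(\<Sum>z\<in>Z. a (tgt z) * T z y) \<le> (\<Sum>z\<in>Z. \<Sum>t\<in>{1..N} - {j}. \<Sum>k\<in>{-1,1::int}. G z t k)"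
    using pw Z by (intro sum_mono) auto
  also have "\<dots> = (\<Sum>t\<in>{1..N} - {j}. \<Sum>k\<in>{-1,1::int}. a t * p t j k * (\<Sum>z\<in>Z. if z = push y (k,t) then 1 else 0))"
    unfolding G_def by (subst sum.swap, rule sum.cong, simp, subst sum.swap) (auto simp: sum_distrib_left)
  also have "\<dots> \<le> (\<Sum>t\<in>{1..N} - {j}. \<Sum>k\<in>{-1,1::int}. a t * p t j k)"
  proof (intro sum_mono)
    fix t k assume t: "t \<in> {1..N} - {j}" and k: "k \<in> {-1,1::int}"
    have "(\<Sum>z\<in>Z. if z = push y (k,t) then 1 else (0::real)) \<le> 1"
      using Z by (simp add: sum.delta')
    moreover have "0 \<le> a t * p t j k" using a[of t] ppos[of t j k] t k y unfolding j_def by (auto intro!: mult_nonneg_nonneg less_imp_le)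
    ultimately show "a t * p t j k * (\<Sum>z\<in>Z. if z = push y (k,t) then 1 else 0) \<le> a t * p t j k"
      by (simp add: mult_left_le)
  qed
  also have "\<dots> = (\<Sum>t\<in>{1..N} - {tgt y}. a t * (\<Sum>k\<in>{-1,1::int}. p t (tgt y) k))"
    unfolding j_def by (simp add: sum_distrib_left mult.assoc algebra_simps)
  finally show ?thesis .
qed

definition Qm :: "nat \<Rightarrow> nat \<Rightarrow> real" where
  "Qm t j = (\<Sum>k\<in>{-1,1::int}. p t j k)"

definition PS :: "real set" where
  "PS = (\<lambda>(i,j,k). p i j k) ` {(i,j,k). i \<in> {1..N} \<and> j \<in> {1..N} \<and> i \<noteq> j \<and> k \<in> {-1,1::int}}"

definition del :: real where "del = min (1/2) (Min PS)"

lemma PS_fin: "finite PS"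
proof -
  have "{(i,j,k). i \<in> {1..N} \<and> j \<in> {1..N} \<and> i \<noteq> j \<and> k \<in> {-1,1::int}} \<subseteq> {1..N} \<times> {1..N} \<times> {-1,1}"
    by auto
  then show ?thesis unfolding PS_def by (intro finite_imageI) (rule finite_subset, auto)
qed

lemma PS_ne: "PS \<noteq> {}"
proof -
  have "(1, 2, 1) \<in> {(i,j,k). i \<in> {1..N} \<and> j \<in> {1..N} \<and> i \<noteq> j \<and> k \<in> {-1,1::int}}"
    using N3 by auto
  then show ?thesis unfolding PS_def by blast
qed

lemma del_pos: "0 < del"
proof -
  have "\<forall>x\<in>PS. 0 < x" unfolding PS_def using ppos by auto
  then have "0 < Min PS" using PS_fin PS_ne by simp
  then show ?thesis unfolding del_def by simp
qed

lemma del_half: "del \<le> 1/2" unfolding del_def by simp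

lemma p_ge: "i \<in> {1..N} \<Longrightarrow> j \<in> {1..N} \<Longrightarrow> i \<noteq> j \<Longrightarrow> k \<in> {-1,1} \<Longrightarrow> del \<le> p i j k"
proof -
  assume a: "i \<in> {1..N}" "j \<in> {1..N}" "i \<noteq> j" "k \<in> {-1,1}"
  then have "p i j k \<in> PS" unfolding PS_def by (intro image_eqI[where x = "(i,j,k)"]) auto
  then have "Min PS \<le> p i j k" using PS_fin by simp
  then show ?thesis unfolding del_def by simp
qed

lemma p_nn: "i \<in> {1..N} \<Longrightarrow> j \<in> {1..N} \<Longrightarrow> i \<noteq> j \<Longrightarrow> k \<in> {-1,1} \<Longrightarrow> 0 \<le> p i j k"
  using ppos[of i j k] by simp

lemma Qm_ge: "t \<in> {1..N} \<Longrightarrow> j \<in> {1..N} \<Longrightarrow> t \<noteq> j \<Longrightarrow> del \<le> Qm t j"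
  unfolding Qm_def using p_ge[of t j 1] p_nn[of t j "-1"] by simp

lemma Qm_nn: "t \<in> {1..N} \<Longrightarrow> j \<in> {1..N} \<Longrightarrow> t \<noteq> j \<Longrightarrow> 0 \<le> Qm t j"
  using Qm_ge del_pos by force

lemma Qm_sum: "t \<in> {1..N} \<Longrightarrow> (\<Sum>j\<in>{1..N} - {t}. Qm t j) = 1"
  unfolding Qm_def using psum by simp

lemma third: "t \<in> {1..N} \<Longrightarrow> j \<in> {1..N} \<Longrightarrow> \<exists>j'\<in>{1..N}. j' \<noteq> t \<and> j' \<noteq> j"
proof -
  assume "t \<in> {1..N}" "j \<in> {1..N}"
  show ?thesis
  proof (cases "1 \<noteq> t \<and> 1 \<noteq> j")
    case True then show ?thesis using N3 by (intro bexI[of _ 1]) auto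
  next
    case F1: False
    show ?thesis
    proof (cases "2 \<noteq> t \<and> 2 \<noteq> j")
      case True then show ?thesis using N3 by (intro bexI[of _ 2]) auto
    next
      case False then show ?thesis using N3 F1 by (intro bexI[of _ 3]) auto
    qed
  qed
qed

lemma Qm_le: assumes "t \<in> {1..N}" "j \<in> {1..N}" "t \<noteq> j" shows "Qm t j \<le> 1 - del"
proof -
  obtain j' where j': "j' \<in> {1..N}" "j' \<noteq> t" "j' \<noteq> j" using third assms by blast
  have "Qm t j + Qm t j' = (\<Sum>i\<in>{j,j'}. Qm t i)" using j' by simp
  also have "\<dots> \<le> (\<Sum>i\<in>{1..N} - {t}. Qm t i)"
    using assms j' Qm_nn by (intro sum_mono2) auto
  also have "\<dots> = 1" using Qm_sum assms by simp
  finally show ?thesis using Qm_ge[of t j'] j' assms by simp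
qed

fun wt :: "nat \<Rightarrow> nat \<Rightarrow> real" where
  "wt 0 t = 1"
| "wt (Suc n) j = (\<Sum>t\<in>{1..N} - {j}. wt n t * Qm t j)"

lemma wt_nn: "j \<in> {1..N} \<Longrightarrow> 0 \<le> wt n j"
proof (induction n arbitrary: j)
  case 0 then show ?case by simp
next
  case (Suc n) then show ?case using Qm_nn by (auto intro!: sum_nonneg mult_nonneg_nonneg)
qed

lemma wt_sum: "(\<Sum>j\<in>{1..N}. wt n j) = N"
proof (induction n)
  case 0 then show ?case by simp
next
  case (Suc n)
  have "(\<Sum>j\<in>{1..N}. wt (Suc n) j) = (\<Sum>j\<in>{1..N}. \<Sum>t\<in>{t\<in>{1..N}. t \<noteq> j}. wt n t * Qm t j)"
    by (intro sum.cong refl) (simp add: set_diff_eq Collect_conj_eq[symmetric] conj_commute)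
  also have "\<dots> = (\<Sum>t\<in>{1..N}. \<Sum>j\<in>{j\<in>{1..N}. t \<noteq> j}. wt n t * Qm t j)"
    by (rule sum.swap_restrict) auto
  also have "\<dots> = (\<Sum>t\<in>{1..N}. wt n t * (\<Sum>j\<in>{1..N} - {t}. Qm t j))"
    by (intro sum.cong refl) (auto simp: sum_distrib_left intro!: sum.cong)
  also have "\<dots> = (\<Sum>t\<in>{1..N}. wt n t)" using Qm_sum by simp
  finally show ?case using Suc by simp
qed

lemma wt_le: "j \<in> {1..N} \<Longrightarrow> wt n j \<le> N"
proof -
  assume j: "j \<in> {1..N}"
  have "wt n j \<le> (\<Sum>j\<in>{1..N}. wt n j)" using j wt_nn by (intro member_le_sum) auto
  then show ?thesis using wt_sum by simp
qed

lemma wt_le2: "j \<in> {1..N} \<Longrightarrow> wt n j \<le> (1 - del) * N"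
proof (cases n)
  case 0
  assume j: "j \<in> {1..N}"
  have "1 \<le> (1/2) * real N" using N3 by simp
  also have "\<dots> \<le> (1 - del) * N" using del_half by (intro mult_right_mono) auto
  finally show ?thesis using 0 by simp
next
  case (Suc m)
  assume j: "j \<in> {1..N}"
  have "wt n j \<le> (\<Sum>t\<in>{1..N} - {j}. wt m t * (1 - del))"
    unfolding Suc using Qm_le wt_nn j by (auto intro!: sum_mono mult_left_mono)
  also have "\<dots> = (1 - del) * (\<Sum>t\<in>{1..N} - {j}. wt m t)"
    by (subst sum_distrib_right[symmetric]) (simp add: mult.commute)
  also have "\<dots> \<le> (1 - del) * (\<Sum>t\<in>{1..N}. wt m t)"
    using del_half wt_nn by (intro mult_left_mono sum_mono2) auto
  finally show ?thesis using wt_sum by simp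
qed

lemma wt_ge: "j \<in> {1..N} \<Longrightarrow> del^2 \<le> wt n j"
proof (cases n)
  case 0
  have "del \<le> 1" using del_half by simp
  then have "del^2 \<le> 1" using del_pos by (simp add: power_le_one)
  then show ?thesis using 0 by simp
next
  case (Suc m)
  assume j: "j \<in> {1..N}"
  have "(\<Sum>t\<in>{1..N} - {j}. wt m t * del) \<le> wt n j"
    unfolding Suc using Qm_ge wt_nn j by (auto intro!: sum_mono mult_left_mono)
  moreover have "(\<Sum>t\<in>{1..N} - {j}. wt m t * del) = del * (\<Sum>t\<in>{1..N} - {j}. wt m t)"
    by (subst sum_distrib_right[symmetric]) (simp add: mult.commute)
  moreover have "(\<Sum>t\<in>{1..N} - {j}. wt m t) = N - wt m j"
    using wt_sum[of m] j by (simp add: sum_diff1)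
  moreover have "N - wt m j \<ge> del * N" using wt_le2[OF j, of m] by (simp add: algebra_simps)
  moreover have "del * N \<ge> del" using N3 del_pos by simp
  ultimately have "del * del \<le> wt n j"
    by (smt (verit) del_pos mult_left_mono)
  then show ?thesis by (simp add: power2_eq_square)
qed

lemma kernel_ok: assumes z: "z \<in> arrows N"
  shows "(\<integral>\<^sup>+ y. ennreal (T z y) \<partial>count_space UNIV) = 1"
proof -
  have "(\<integral>\<^sup>+ y. ennreal (T z y) \<partial>count_space UNIV) = (\<Sum>y\<in>ch z. ennreal (T z y))"
  proof (rule nn_integral_count_space')
    show "finite (ch z)" by (rule finite_ch)
    fix y assume "y \<notin> ch z"
    then have "T z y = 0" using T_nz ch_mem by blast
    then show "ennreal (T z y) = 0" by simp
  qed simp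
  also have "\<dots> = ennreal (\<Sum>y\<in>ch z. T z y)" using T_nonneg[OF z] by simp
  also have "\<dots> = 1" using T_sum1[OF z finite_ch] by simp
  finally show ?thesis .
qed

lemma kernel_pmf: "z \<in> arrows N \<Longrightarrow> pmf (kernel N p z) y = T z y"
  unfolding kernel_def using T_nonneg kernel_ok by (subst pmf_embed_pmf) auto

lemma kernel_set: "z \<in> arrows N \<Longrightarrow> set_pmf (kernel N p z) = {y. T z y \<noteq> 0}"
  unfolding kernel_def using T_nonneg kernel_ok by (subst set_embed_pmf) auto

end

locale gw0 = gw +
  fixes x0 :: arrow
  assumes x0: "x0 \<in> arrows N"
begin

definition mu :: "nat \<Rightarrow> arrow pmf" where
  "mu n = map_pmf (\<lambda>w. w ! n) (path_pmf N p x0 n)"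

definition L0 :: nat where "L0 = length (snd x0)"

lemma path_len: "w \<in> set_pmf (path_pmf N p x0 n) \<Longrightarrow> length w = Suc n"
  by (induction n arbitrary: w) auto

lemma mu_0: "mu 0 = return_pmf x0"
  unfolding mu_def by simp

lemma mu_Suc: "mu (Suc n) = bind_pmf (mu n) (kernel N p)"
proof -
  have "mu (Suc n) = bind_pmf (path_pmf N p x0 n) (\<lambda>w. map_pmf (\<lambda>z. (w @ [z]) ! Suc n) (kernel N p (last w)))"
    unfolding mu_def by (simp add: map_bind_pmf map_pmf_comp)
  also have "\<dots> = bind_pmf (path_pmf N p x0 n) (\<lambda>w. kernel N p (w ! n))"
  proof (rule bind_pmf_cong[OF refl])
    fix w assume w: "w \<in> set_pmf (path_pmf N p x0 n)"
    then have l: "length w = Suc n" by (rule path_len)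
    then have "last w = w ! n" by (metis diff_Suc_1 last_conv_nth list.size(3) nat.distinct(1))
    moreover have "(\<lambda>z. (w @ [z]) ! Suc n) = (\<lambda>z. z)" using l by (auto simp: nth_append)
    ultimately show "map_pmf (\<lambda>z. (w @ [z]) ! Suc n) (kernel N p (last w)) = kernel N p (w ! n)" by simp
  qed
  also have "\<dots> = bind_pmf (mu n) (kernel N p)" unfolding mu_def by (simp add: bind_map_pmf)
  finally show ?thesis .
qed

lemma mu_set: "set_pmf (mu n) \<subseteq> Ub N (n + L0)"
proof (induction n)
  case 0 then show ?case using x0 by (simp add: mu_0 Ub_def L0_def)
next
  case (Suc n)
  show ?case
  proof
    fix y assume "y \<in> set_pmf (mu (Suc n))"
    then obtain z where z: "z \<in> set_pmf (mu n)" and y: "y \<in> set_pmf (kernel N p z)"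
      by (auto simp: mu_Suc)
    have zU: "z \<in> Ub N (n + L0)" using z Suc by auto
    then have za: "z \<in> arrows N" by (simp add: Ub_def)
    then have "T z y \<noteq> 0" using y kernel_set by auto
    then have "y \<in> arrows N \<and> length (snd y) \<le> Suc (length (snd z))" using T_succ[OF za] by blast
    then show "y \<in> Ub N (Suc n + L0)" using zU by (auto simp: Ub_def)
  qed
qed

lemma mu_rec: assumes M: "n + L0 \<le> M"
  shows "pmf (mu (Suc n)) y = (\<Sum>z\<in>Ub N M. pmf (mu n) z * T z y)"
proof -
  have sub: "set_pmf (mu n) \<subseteq> Ub N M" using mu_set[of n] M by (auto simp: Ub_def)
  have "pmf (mu (Suc n)) y = measure_pmf.expectation (mu n) (\<lambda>z. pmf (kernel N p z) y)"
    by (simp add: mu_Suc pmf_bind)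
  also have "\<dots> = (\<Sum>z\<in>Ub N M. pmf (mu n) z *\<^sub>R pmf (kernel N p z) y)"
    using sub finite_Ub by (intro integral_measure_pmf) auto
  also have "\<dots> = (\<Sum>z\<in>Ub N M. pmf (mu n) z * T z y)"
    by (intro sum.cong refl) (auto simp: Ub_def kernel_pmf)
  finally show ?thesis .
qed

lemma prob_at_mu: "prob_at N p x0 y n = pmf (mu n) y"
  unfolding prob_at_def mu_def pmf_map by (simp add: vimage_def)

lemma prob_hit_le: "prob_hit N p x0 y n \<le> prob_at N p x0 y n"
  unfolding prob_hit_def prob_at_def by (intro measure_pmf.finite_measure_mono) auto

abbreviation u :: "nat \<Rightarrow> arrow \<Rightarrow> real" where "u n z \<equiv> pmf (mu n) z"

definition aw :: "nat \<Rightarrow> arrow \<Rightarrow> real" where "aw n z = wt n (tgt z)"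
definition hh :: "nat \<Rightarrow> arrow \<Rightarrow> real" where "hh n z = u n z / aw n z"
definition Phi :: "nat \<Rightarrow> real" where "Phi n = (\<Sum>z\<in>Ub N (n + L0 + 1). (u n z)^2 / aw n z)"
definition Wt :: "nat \<Rightarrow> arrow \<Rightarrow> arrow \<Rightarrow> real" where "Wt n y z = aw n z * T z y"
definition Dd :: "nat \<Rightarrow> arrow \<Rightarrow> real" where
  "Dd n y = (\<Sum>z\<in>Ub N (n+L0+1). Wt n y z) * (\<Sum>z\<in>Ub N (n+L0+1). Wt n y z * hh n z ^2)
          - (\<Sum>z\<in>Ub N (n+L0+1). Wt n y z * hh n z)^2"
definition e1 :: "arrow \<Rightarrow> arrow" where "e1 v = ext v (j1 (tgt v))"
definition e2 :: "arrow \<Rightarrow> arrow" where "e2 v = ext v (j2 (tgt v))"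

lemma u_zero: "z \<notin> Ub N (n + L0) \<Longrightarrow> u n z = 0"
  using mu_set[of n] by (auto simp: pmf_eq_0_set_pmf)

lemma aw_ge: "z \<in> arrows N \<Longrightarrow> del^2 \<le> aw n z"
  unfolding aw_def using wt_ge arrows_tgt by blast

lemma aw_le: "z \<in> arrows N \<Longrightarrow> aw n z \<le> N"
  unfolding aw_def using wt_le arrows_tgt by blast

lemma aw_pos: "z \<in> arrows N \<Longrightarrow> 0 < aw n z"
  using aw_ge[of z n] del_pos by (smt (verit) zero_less_power)

lemma Wt_nn: "z \<in> arrows N \<Longrightarrow> 0 \<le> Wt n y z"
  unfolding Wt_def using aw_pos[of z n] T_nonneg[of z y] by simp

lemma Ub_arrows: "Ub N M \<subseteq> arrows N" by (auto simp: Ub_def)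

lemma Ub_mono: "M \<le> M' \<Longrightarrow> Ub N M \<subseteq> Ub N M'" by (auto simp: Ub_def)

lemma Dd_nn: "0 \<le> Dd n y"
  unfolding Dd_def by (intro lagrange_nn finite_Ub Wt_nn) (auto simp: Ub_def)

lemma e_facts: assumes v: "v \<in> arrows N"
  shows "e1 v \<in> arrows N" "e2 v \<in> arrows N" "tgt (e1 v) = j1 (tgt v)" "tgt (e2 v) = j2 (tgt v)"
    "length (snd (e1 v)) = Suc (length (snd v))" "length (snd (e2 v)) = Suc (length (snd v))"
    "e1 v \<noteq> v" "e2 v \<noteq> v"
    "T v (e2 v) \<ge> del" "T v (e1 v) \<ge> del" "T (e1 v) (e2 v) \<ge> del" "T (e2 v) (e1 v) \<ge> del"
proof -
  have t: "tgt v \<in> {1..N}" using arrows_tgt[OF v] .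
  note J = j12[OF N3 t]
  have l: "lab v \<in> {-1,1}" using lab_in[OF v] .
  show a1: "e1 v \<in> arrows N" "e2 v \<in> arrows N" unfolding e1_def e2_def using ext_arrows[OF v] J by auto
  show "tgt (e1 v) = j1 (tgt v)" "tgt (e2 v) = j2 (tgt v)" by (simp_all add: e1_def e2_def)
  show "length (snd (e1 v)) = Suc (length (snd v))" "length (snd (e2 v)) = Suc (length (snd v))"
    by (simp_all add: e1_def e2_def)
  show "e1 v \<noteq> v" "e2 v \<noteq> v" by (simp_all add: e1_def e2_def ext_ne)
  have "del \<le> p (tgt v) (j2 (tgt v)) (lab v)" using p_ge t J l by auto
  also have "\<dots> \<le> T v (push v (lab v, j2 (tgt v)))" using T_lower J l t by auto
  finally show "T v (e2 v) \<ge> del" unfolding e2_def push_lab[OF v] .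
  have "del \<le> p (tgt v) (j1 (tgt v)) (lab v)" using p_ge t J l by auto
  also have "\<dots> \<le> T v (push v (lab v, j1 (tgt v)))" using T_lower J l t by auto
  finally show "T v (e1 v) \<ge> del" unfolding e1_def push_lab[OF v] .
  have "del \<le> p (j1 (tgt v)) (j2 (tgt v)) (lab v)" using p_ge t J l by auto
  also have "\<dots> \<le> T (e1 v) (push (e1 v) (lab v, j2 (tgt v)))"
    using T_lower[of "j2 (tgt v)" "e1 v" "lab v"] J l t by (auto simp: e1_def)
  finally show "T (e1 v) (e2 v) \<ge> del" unfolding e1_def e2_def using push_ext J by auto
  have "del \<le> p (j2 (tgt v)) (j1 (tgt v)) (lab v)" using p_ge t J l by auto
  also have "\<dots> \<le> T (e2 v) (push (e2 v) (lab v, j1 (tgt v)))"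
    using T_lower[of "j1 (tgt v)" "e2 v" "lab v"] J l t by (auto simp: e2_def)
  finally show "T (e2 v) (e1 v) \<ge> del" unfolding e1_def e2_def using push_ext J by auto
qed

lemma Dd_e:
  assumes v: "v \<in> Ub N (n + L0)"
  shows "del^6 * (hh n (e1 v) - hh n v)^2 \<le> Dd n (e2 v)"
    and "del^6 * (hh n (e2 v) - hh n v)^2 \<le> Dd n (e1 v)"
proof -
  have va: "v \<in> arrows N" using v Ub_arrows by auto
  note E = e_facts[OF va]
  have inA: "v \<in> Ub N (n+L0+1)" "e1 v \<in> Ub N (n+L0+1)" "e2 v \<in> Ub N (n+L0+1)"
    using v E by (auto simp: Ub_def)
  have d3: "del^3 \<le> Wt n y z" if "z \<in> arrows N" "del \<le> T z y" for z y
  proof -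
    have "del^2 * del \<le> aw n z * T z y"
      using aw_ge[OF that(1), of n] aw_pos[OF that(1), of n] that(2) del_pos by (intro mult_mono) auto
    then show ?thesis by (simp add: Wt_def power_numeral_reduce)
  qed
  have d6: "del^6 \<le> Wt n y z1 * Wt n y z2" if "z1 \<in> arrows N" "del \<le> T z1 y" "z2 \<in> arrows N" "del \<le> T z2 y" for z1 z2 y
  proof -
    have "del^3 * del^3 \<le> Wt n y z1 * Wt n y z2"
      using d3[OF that(1,2)] d3[OF that(3,4)] del_pos Wt_nn[OF that(1)] by (intro mult_mono) auto
    then show ?thesis by (simp add: power_add[symmetric])
  qed
  have "del^6 * (hh n (e1 v) - hh n v)^2 \<le> Wt n (e2 v) (e1 v) * Wt n (e2 v) v * (hh n (e1 v) - hh n v)^2"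
    using d6[of "e1 v" "e2 v" v] E va by (intro mult_right_mono) auto
  also have "\<dots> \<le> Dd n (e2 v)" unfolding Dd_def
    using inA E by (intro lagrange_ge finite_Ub Wt_nn) (auto simp: Ub_def)
  finally show "del^6 * (hh n (e1 v) - hh n v)^2 \<le> Dd n (e2 v)" .
  have "del^6 * (hh n (e2 v) - hh n v)^2 \<le> Wt n (e1 v) (e2 v) * Wt n (e1 v) v * (hh n (e2 v) - hh n v)^2"
    using d6[of "e2 v" "e1 v" v] E va by (intro mult_right_mono) auto
  also have "\<dots> \<le> Dd n (e1 v)" unfolding Dd_def
    using inA E by (intro lagrange_ge finite_Ub Wt_nn) (auto simp: Ub_def)
  finally show "del^6 * (hh n (e2 v) - hh n v)^2 \<le> Dd n (e1 v)" .
qed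

lemma e1_inj: "inj e1" unfolding inj_def e1_def using ext_inj by blast
lemma e2_inj: "inj e2" unfolding inj_def e2_def using ext_inj by blast
lemma e12_ne: "v' \<in> arrows N \<Longrightarrow> e1 v \<noteq> e2 v'"
  unfolding e1_def e2_def using ext_inj j12[OF N3 arrows_tgt] by metis

lemma sum_e:
  fixes f :: "arrow \<Rightarrow> real"
  assumes f: "\<And>y. y \<in> Ub N (M+1) \<Longrightarrow> 0 \<le> f y"
  shows "(\<Sum>v\<in>Ub N M. f (e1 v) + f (e2 v)) \<le> (\<Sum>y\<in>Ub N (M+1). f y)"
proof -
  have "(\<Sum>v\<in>Ub N M. f (e1 v) + f (e2 v)) = (\<Sum>y\<in>e1 ` Ub N M. f y) + (\<Sum>y\<in>e2 ` Ub N M. f y)"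
    using sum.reindex[OF inj_on_subset[OF e1_inj subset_UNIV], of f "Ub N M"]
      sum.reindex[OF inj_on_subset[OF e2_inj subset_UNIV], of f "Ub N M"]
    by (simp add: sum.distrib)
  also have "\<dots> = (\<Sum>y\<in>e1 ` Ub N M \<union> e2 ` Ub N M. f y)"
  proof (intro sum.union_disjoint[symmetric] finite_imageI finite_Ub)
    show "e1 ` Ub N M \<inter> e2 ` Ub N M = {}"
    proof (rule ccontr)
      assume "e1 ` Ub N M \<inter> e2 ` Ub N M \<noteq> {}"
      then obtain v v' where "e1 v = e2 v'" "v' \<in> Ub N M" by blast
      then show False using e12_ne[of v' v] Ub_arrows by blast
    qed
  qed
  also have "\<dots> \<le> (\<Sum>y\<in>Ub N (M+1). f y)"
  proof (rule sum_mono2)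
    show "finite (Ub N (M+1))" by (rule finite_Ub)
    show "e1 ` Ub N M \<union> e2 ` Ub N M \<subseteq> Ub N (M + 1)"
    proof
      fix y assume "y \<in> e1 ` Ub N M \<union> e2 ` Ub N M"
      then obtain v where v: "v \<in> Ub N M" "y = e1 v \<or> y = e2 v" by blast
      then have "v \<in> arrows N" "length (snd v) \<le> M" by (auto simp: Ub_def)
      then show "y \<in> Ub N (M+1)" using v e_facts[of v] by (auto simp: Ub_def)
    qed
    show "\<And>b. b \<in> Ub N (M + 1) - (e1 ` Ub N M \<union> e2 ` Ub N M) \<Longrightarrow> 0 \<le> f b" using f by auto
  qed
  finally show ?thesis .
qed

lemma hh_zero: "z \<notin> Ub N (n + L0) \<Longrightarrow> hh n z = 0"
  unfolding hh_def using u_zero by simp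

lemma sum_hh_ext: "(\<Sum>y\<in>Ub N (n+L0+1). hh n y ^2) = (\<Sum>y\<in>Ub N (n+L0). hh n y ^2)"
  by (rule sum.mono_neutral_right[OF finite_Ub Ub_mono]) (auto simp: hh_zero)

lemma iso: "(\<Sum>v\<in>Ub N (n+L0). hh n v ^2)
   \<le> 6 * (\<Sum>v\<in>Ub N (n+L0). (hh n (e1 v) - hh n v)^2 + (hh n (e2 v) - hh n v)^2)"
proof -
  define X where "X = (\<Sum>v\<in>Ub N (n+L0). hh n v ^2)"
  define D where "D = (\<Sum>v\<in>Ub N (n+L0). (hh n (e1 v) - hh n v)^2 + (hh n (e2 v) - hh n v)^2)"
  have pw: "2 * hh n v ^2 \<le> 3 * ((hh n (e1 v) - hh n v)^2 + (hh n (e2 v) - hh n v)^2)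
      + 3/2 * (hh n (e1 v) ^2 + hh n (e2 v) ^2)" for v
  proof -
    have q: "b^2 \<le> 3 * (a - b)^2 + 3/2 * a^2" for a b :: real
    proof -
      have "0 \<le> 2 * (b - 3/2 * a)^2" by simp
      then show ?thesis by (simp add: power2_eq_square algebra_simps)
    qed
    show ?thesis using q[of "hh n v" "hh n (e1 v)"] q[of "hh n v" "hh n (e2 v)"] unfolding distrib_left by linarith
  qed
  have "2 * X \<le> (\<Sum>v\<in>Ub N (n+L0). 3 * ((hh n (e1 v) - hh n v)^2 + (hh n (e2 v) - hh n v)^2)
      + 3/2 * (hh n (e1 v) ^2 + hh n (e2 v) ^2))"
    unfolding X_def sum_distrib_left by (rule sum_mono) (rule pw)
  also have "\<dots> = (\<Sum>v\<in>Ub N (n+L0). 3 * ((hh n (e1 v) - hh n v)^2 + (hh n (e2 v) - hh n v)^2))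
      + (\<Sum>v\<in>Ub N (n+L0). 3/2 * (hh n (e1 v) ^2 + hh n (e2 v) ^2))"
    by (rule sum.distrib)
  also have "\<dots> = 3 * D + 3/2 * (\<Sum>v\<in>Ub N (n+L0). hh n (e1 v) ^2 + hh n (e2 v) ^2)"
    unfolding D_def by (simp only: sum_distrib_left)
  also have "(\<Sum>v\<in>Ub N (n+L0). hh n (e1 v) ^2 + hh n (e2 v) ^2) \<le> (\<Sum>y\<in>Ub N (n+L0+1). hh n y ^2)"
    by (rule sum_e) simp
  also have "\<dots> = X" unfolding X_def by (rule sum_hh_ext)
  finally have "2 * X \<le> 3 * D + 3/2 * X" by simp
  then show ?thesis unfolding X_def D_def by simp
qed

lemma Phi_le: "Phi n \<le> N * (\<Sum>v\<in>Ub N (n+L0). hh n v ^2)"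
proof -
  have "Phi n = (\<Sum>z\<in>Ub N (n + L0). (u n z)^2 / aw n z)"
    unfolding Phi_def by (rule sum.mono_neutral_right[OF finite_Ub Ub_mono]) (auto simp: u_zero)
  also have "\<dots> \<le> (\<Sum>z\<in>Ub N (n + L0). N * hh n z ^2)"
  proof (rule sum_mono)
    fix z assume "z \<in> Ub N (n + L0)"
    then have z: "z \<in> arrows N" by (simp add: Ub_def)
    have "(u n z)^2 / aw n z = aw n z * hh n z ^2"
      using aw_pos[OF z, of n] unfolding hh_def by (simp add: power2_eq_square field_simps)
    also have "\<dots> \<le> N * hh n z ^2" using aw_le[OF z, of n] by (intro mult_right_mono) auto
    finally show "(u n z)^2 / aw n z \<le> N * hh n z ^2" .
  qed
  finally show ?thesis by (simp add: sum_distrib_left)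
qed

lemma sum_u: "(\<Sum>z\<in>Ub N (n+L0+1). Wt n y z * hh n z) = u (Suc n) y"
proof -
  have "(\<Sum>z\<in>Ub N (n+L0+1). Wt n y z * hh n z) = (\<Sum>z\<in>Ub N (n+L0+1). u n z * T z y)"
  proof (intro sum.cong refl)
    fix z assume "z \<in> Ub N (n+L0+1)"
    then have z: "z \<in> arrows N" by (simp add: Ub_def)
    show "Wt n y z * hh n z = u n z * T z y"
      using aw_pos[OF z, of n] unfolding Wt_def hh_def by (simp add: field_simps)
  qed
  also have "\<dots> = u (Suc n) y" by (rule mu_rec[symmetric]) simp
  finally show ?thesis .
qed

lemma sumC: "(\<Sum>y\<in>Ub N (n+L0+2). \<Sum>z\<in>Ub N (n+L0+1). Wt n y z * hh n z ^2) = Phi n"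
proof -
  have "(\<Sum>y\<in>Ub N (n+L0+2). \<Sum>z\<in>Ub N (n+L0+1). Wt n y z * hh n z ^2)
      = (\<Sum>z\<in>Ub N (n+L0+1). (u n z)^2 / aw n z * (\<Sum>y\<in>Ub N (n+L0+2). T z y))"
    unfolding sum_distrib_left
  proof (subst sum.swap, intro sum.cong refl)
    fix z y assume "z \<in> Ub N (n+L0+1)"
    then have z: "z \<in> arrows N" by (simp add: Ub_def)
    show "Wt n y z * hh n z ^2 = (u n z)^2 / aw n z * T z y"
      using aw_pos[OF z, of n] unfolding Wt_def hh_def by (simp add: power2_eq_square field_simps)
  qed
  also have "\<dots> = (\<Sum>z\<in>Ub N (n+L0+1). (u n z)^2 / aw n z)"
  proof (intro sum.cong refl)
    fix z assume zU: "z \<in> Ub N (n+L0+1)"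
    then have z: "z \<in> arrows N" by (simp add: Ub_def)
    have "ch z \<subseteq> Ub N (n+L0+2)"
      using ch_sub[OF z] zU Ub_mono[of "Suc (length (snd z))" "n+L0+2"] by (auto simp: Ub_def)
    then have "(\<Sum>y\<in>Ub N (n+L0+2). T z y) = 1" using T_sum1[OF z finite_Ub] by simp
    then show "(u n z)^2 / aw n z * (\<Sum>y\<in>Ub N (n+L0+2). T z y) = (u n z)^2 / aw n z" by simp
  qed
  finally show ?thesis unfolding Phi_def .
qed

lemma Bbound: assumes y: "y \<in> arrows N"
  shows "(\<Sum>z\<in>Ub N (n+L0+1). Wt n y z) \<le> aw (Suc n) y"
proof -
  have "(\<Sum>z\<in>Ub N (n+L0+1). Wt n y z) = (\<Sum>z\<in>Ub N (n+L0+1). wt n (tgt z) * T z y)"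
    unfolding Wt_def aw_def ..
  also have "\<dots> \<le> (\<Sum>t\<in>{1..N} - {tgt y}. wt n t * (\<Sum>k\<in>{-1,1::int}. p t (tgt y) k))"
    using wt_nn arrows_tgt[OF y] by (intro pred_bound finite_Ub Ub_arrows) auto
  also have "\<dots> = aw (Suc n) y" unfolding aw_def by (simp add: Qm_def)
  finally show ?thesis .
qed

lemma Phi_step0: "Phi (Suc n) \<le> Phi n - (1 / N) * (\<Sum>y\<in>Ub N (n+L0+2). Dd n y)"
proof -
  define C where "C y = (\<Sum>z\<in>Ub N (n+L0+1). Wt n y z * hh n z ^2)" for y
  have pw: "(u (Suc n) y)^2 / aw (Suc n) y \<le> C y - Dd n y / N" if yU: "y \<in> Ub N (n+L0+2)" for y
  proof -
    have y: "y \<in> arrows N" using yU by (simp add: Ub_def)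
    define B where "B = (\<Sum>z\<in>Ub N (n+L0+1). Wt n y z)"
    define b where "b = aw (Suc n) y"
    have Bb: "B \<le> b" unfolding B_def b_def by (rule Bbound[OF y])
    have b0: "0 < b" unfolding b_def by (rule aw_pos[OF y])
    have bN: "b \<le> N" unfolding b_def by (rule aw_le[OF y])
    have C0: "0 \<le> C y" unfolding C_def using Wt_nn by (intro sum_nonneg mult_nonneg_nonneg) (auto simp: Ub_def)
    have D0: "0 \<le> Dd n y" by (rule Dd_nn)
    have De: "(u (Suc n) y)^2 = B * C y - Dd n y" unfolding Dd_def B_def C_def sum_u by simp
    have "(u (Suc n) y)^2 \<le> b * C y - Dd n y" using De Bb C0 by (simp add: mult_right_mono)
    then have "(u (Suc n) y)^2 / b \<le> C y - Dd n y / b" using b0 by (simp add: field_simps)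
    also have "Dd n y / N \<le> Dd n y / b" using b0 bN D0 by (simp add: frac_le)
    then have "C y - Dd n y / b \<le> C y - Dd n y / N" by simp
    finally show ?thesis unfolding b_def .
  qed
  have "Phi (Suc n) = (\<Sum>y\<in>Ub N (n+L0+2). (u (Suc n) y)^2 / aw (Suc n) y)"
    unfolding Phi_def by simp
  also have "\<dots> \<le> (\<Sum>y\<in>Ub N (n+L0+2). C y - Dd n y / N)" by (rule sum_mono) (rule pw)
  also have "\<dots> = Phi n - (1 / N) * (\<Sum>y\<in>Ub N (n+L0+2). Dd n y)"
    unfolding sum_subtractf C_def sumC by (simp add: sum_divide_distrib)
  finally show ?thesis .
qed

definition cc :: real where "cc = del^6 / (6 * N^2)"

lemma Phi_step: "Phi (Suc n) \<le> (1 - cc) * Phi n"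
proof -
  define X where "X = (\<Sum>v\<in>Ub N (n+L0). hh n v ^2)"
  define D where "D = (\<Sum>v\<in>Ub N (n+L0). (hh n (e1 v) - hh n v)^2 + (hh n (e2 v) - hh n v)^2)"
  have N0: "(0::real) < N" using N3 by simp
  have "del^6 * D \<le> (\<Sum>v\<in>Ub N (n+L0). Dd n (e1 v) + Dd n (e2 v))"
    unfolding D_def sum_distrib_left
  proof (rule sum_mono)
    fix v assume v: "v \<in> Ub N (n+L0)"
    show "del^6 * ((hh n (e1 v) - hh n v)^2 + (hh n (e2 v) - hh n v)^2) \<le> Dd n (e1 v) + Dd n (e2 v)"
      using Dd_e[OF v] by (simp add: algebra_simps)
  qed
  also have "\<dots> \<le> (\<Sum>y\<in>Ub N (n+L0+1). Dd n y)" by (rule sum_e) (rule Dd_nn)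
  also have "\<dots> \<le> (\<Sum>y\<in>Ub N (n+L0+2). Dd n y)"
    using Dd_nn by (intro sum_mono2 finite_Ub Ub_mono) auto
  finally have DD: "del^6 * D \<le> (\<Sum>y\<in>Ub N (n+L0+2). Dd n y)" .
  have XD: "X \<le> 6 * D" unfolding X_def D_def by (rule iso)
  have PX: "Phi n \<le> N * X" unfolding X_def by (rule Phi_le)
  have s1: "Phi (Suc n) \<le> Phi n - (1 / N) * (del^6 * D)"
    using Phi_step0[of n] DD N0 by (smt (verit) divide_pos_pos mult_left_mono)
  have s2: "(1 / N) * (del^6 * (X / 6)) \<le> (1 / N) * (del^6 * D)"
    using XD del_pos N0 by (intro mult_left_mono) auto
  have s3: "(1 / N) * (del^6 * (Phi n / N / 6)) \<le> (1 / N) * (del^6 * (X / 6))"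
    using PX del_pos N0 by (intro mult_left_mono) (auto simp: field_simps)
  have "Phi (Suc n) \<le> Phi n - (1 / N) * (del^6 * (Phi n / N / 6))" using s1 s2 s3 by linarith
  then show ?thesis unfolding cc_def by (simp add: field_simps power2_eq_square)
qed

lemma cc_pos: "0 < cc" unfolding cc_def using del_pos N3 by simp

lemma cc_le: "cc \<le> 1"
proof -
  have d1: "del \<le> 1" using del_half by simp
  have "del^6 \<le> 1" using del_pos d1 by (simp add: power_le_one)
  moreover have "(1::real) \<le> 6 * real N^2"
  proof -
    have "(1::real) \<le> real N" using N3 by simp
    then have "1 \<le> real N * real N" by (metis mult_le_cancel_left1 order_trans less_le_not_le zero_less_one mult.right_neutral mult_left_mono zero_le_one)
    then show ?thesis by (simp add: power2_eq_square)
  qed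
  ultimately show ?thesis unfolding cc_def by (simp add: divide_le_eq_1) linarith
qed

lemma Phi_nn: "0 \<le> Phi n"
  unfolding Phi_def using aw_pos by (intro sum_nonneg divide_nonneg_pos) (auto simp: Ub_def)

lemma Phi_0: "Phi 0 = 1"
proof -
  have "Phi 0 = (\<Sum>z\<in>Ub N (L0 + 1). if z = x0 then 1 else 0)"
    unfolding Phi_def by (intro sum.cong refl) (auto simp: mu_0 aw_def indicator_def)
  also have "\<dots> = 1" using x0 finite_Ub by (simp add: sum.delta' Ub_def L0_def)
  finally show ?thesis .
qed

lemma Phi_bound: "Phi n \<le> (1 - cc)^n"
proof (induction n)
  case 0 then show ?case by (simp add: Phi_0)
next
  case (Suc n)
  have "Phi (Suc n) \<le> (1 - cc) * Phi n" by (rule Phi_step)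
  also have "\<dots> \<le> (1 - cc) * (1 - cc)^n" using Suc cc_le by (intro mult_left_mono) auto
  finally show ?case by simp
qed

lemma u_bound: "(u n y)^2 \<le> N * (1 - cc)^n"
proof (cases "y \<in> Ub N (n + L0 + 1)")
  case True
  then have y: "y \<in> arrows N" by (simp add: Ub_def)
  have "(u n y)^2 / aw n y \<le> Phi n"
    unfolding Phi_def using True aw_pos by (intro member_le_sum finite_Ub divide_nonneg_pos) (auto simp: Ub_def)
  then have "(u n y)^2 \<le> aw n y * Phi n" using aw_pos[OF y, of n] by (simp add: divide_le_eq mult.commute)
  also have "\<dots> \<le> N * (1 - cc)^n" using aw_le[OF y, of n] Phi_nn Phi_bound aw_pos[OF y, of n]
    by (intro mult_mono) auto
  finally show ?thesis .
next
  case False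
  then have "y \<notin> Ub N (n+L0)" using Ub_mono[of "n+L0" "n+L0+1"] by auto
  then have "u n y = 0" by (rule u_zero)
  then show ?thesis using cc_le by simp
qed

lemma prob_at_bound: "\<bar>prob_at N p x0 y n\<bar> \<le> sqrt N * sqrt (1 - cc) ^ n"
proof -
  have "\<bar>prob_at N p x0 y n\<bar> = sqrt ((u n y)^2)" by (simp add: prob_at_mu)
  also have "\<dots> \<le> sqrt (N * (1 - cc)^n)" using u_bound by (rule real_sqrt_le_mono)
  also have "\<dots> = sqrt N * sqrt (1 - cc) ^ n" by (simp add: real_sqrt_mult real_sqrt_power)
  finally show ?thesis .
qed

lemma prob_hit_bound: "\<bar>prob_hit N p x0 y n\<bar> \<le> sqrt N * sqrt (1 - cc) ^ n"
proof -
  have "0 \<le> prob_hit N p x0 y n" unfolding prob_hit_def by simp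
  then have "\<bar>prob_hit N p x0 y n\<bar> \<le> \<bar>prob_at N p x0 y n\<bar>" using prob_hit_le[of y n] by linarith
  then show ?thesis using prob_at_bound by (rule order_trans)
qed

end

lemma conv_radius_gt1:
  fixes f :: "nat \<Rightarrow> real"
  assumes r: "0 \<le> r" "r < 1" and b: "\<And>n. \<bar>f n\<bar> \<le> C * r^n"
  shows "conv_radius f > 1"
proof -
  define r' where "r' = max r (1/2)"
  have r': "0 < r'" "r' < 1" "r \<le> r'" using r unfolding r'_def by auto
  have C: "0 \<le> C" using b[of 0] by simp
  have b': "\<bar>f n\<bar> \<le> C * r'^n" for n
    using b[of n] C r r' by (smt (verit) mult_left_mono power_mono)
  have "ereal (1 / r') \<le> conv_radius f"
  proof (rule conv_radius_geI_ex')
    fix \<rho> :: real assume \<rho>: "0 < \<rho>" "ereal \<rho> < ereal (1 / r')"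
    then have \<rho>r: "r' * \<rho> < 1" using r' by (simp add: field_simps)
    have "summable (\<lambda>n. C * (r' * \<rho>)^n)"
      using \<rho>r r' \<rho> by (intro summable_mult summable_geometric) auto
    moreover have nb: "norm (f n * of_real \<rho> ^ n) \<le> C * (r' * \<rho>)^n" for n
    proof -
      have "norm (f n * of_real \<rho> ^ n) = \<bar>f n\<bar> * \<rho>^n" using \<rho> by (simp add: abs_mult power_abs)
      also have "\<dots> \<le> C * r'^n * \<rho>^n" using b' \<rho> by (intro mult_right_mono) auto
      finally show ?thesis by (simp add: power_mult_distrib mult.assoc)
    qed
    ultimately show "summable (\<lambda>n. f n * of_real \<rho> ^ n)"
      using summable_comparison_test'[of "\<lambda>n. C * (r' * \<rho>)^n" 0 "\<lambda>n. f n * of_real \<rho> ^ n"] by blast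
  qed
  moreover have "1 < 1 / r'" using r' by simp
  then have "ereal 1 < ereal (1 / r')" by simp
  ultimately have "ereal 1 < conv_radius f" using less_le_trans by blast
  then show ?thesis by (simp add: one_ereal_def)
qed

theorem proposition5p7:
  fixes N :: nat and p :: "nat \<Rightarrow> nat \<Rightarrow> int \<Rightarrow> real"
  assumes "N \<ge> 3"
    and "\<And>i j k. i \<in> {1..N} \<Longrightarrow> j \<in> {1..N} \<Longrightarrow> i \<noteq> j \<Longrightarrow> k \<in> {-1, 1}
           \<Longrightarrow> 0 < p i j k \<and> p i j k < 1"
    and "\<And>i. i \<in> {1..N} \<Longrightarrow> (\<Sum>j\<in>{1..N} - {i}. \<Sum>k\<in>{-1, 1::int}. p i j k) = 1"
    and "x \<in> arrows N" and "y \<in> arrows N"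
  shows "conv_radius (prob_at N p x y) > 1 \<and> conv_radius (prob_hit N p x y) > 1"
proof -
  interpret gw0 N p x
    by unfold_locales (use assms in auto)
  have r: "0 \<le> sqrt (1 - cc)" "sqrt (1 - cc) < 1" using cc_pos cc_le by auto
  show ?thesis
    using conv_radius_gt1[OF r prob_at_bound[of y]] conv_radius_gt1[OF r prob_hit_bound[of y]] by blast
qed

end
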